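(* Let $c$ be continuous and satisfy (C1)–(C3). Let $0\le\overline h\in L^\infty(\mathbb{R}^d\times\mathbb{R}^d)$ have compact support and let $0\le f,g\in L^1_c(\mathbb{R}^d)$ with $\Gamma(f,g)^{\overline h}\ne\emptyset$. If $h\in\Gamma(f,g)^{\overline h}$ minimizes $I_c$ over $\Gamma(f,g)^{\overline h}$, then $h$ is geometrically extreme.
   Context: Cost assumptions: (C1) $c$ is bounded; (C2) there is a Lebesgue-negligible closed set $Z\subset\mathbb{R}^d\times\mathbb{R}^d$ with $c\in C^2((\mathbb{R}^d\times\mathbb{R}^d)\setminus Z)$; (C3) $\det D^2_{xy}c(x,y)\ne0$ for all $(x,y)\notin Z$, where $D^2_{xy}c=(\partial^2c/\partial x_i\partial y_j)_{i,j}$. $L^1_c$: integrable functions with compact support. $\Gamma(f,g)$: the $0\le h\in L^1_c(\mathbb{R}^d\times\mathbb{R}^d)$ with $\int h(x,y)dy=f(x)$ and $\int h(x,y)dx=g(y)$ a.e.; $\Gamma(f,g)^{\overline h}:=\{h\in\Gamma(f,g):h\le\overline h\text{ a.e.}\}$. $I_c(h):=\int c\,h\,dx\,dy$. A density $h\in\Gamma(f,g)^{\overline h}$ is geometrically extreme if there is a Lebesgue measurable $W\subset\mathbb{R}^{2d}$ with $h=\overline h\,1_W$ almost everywhere. *)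

theory Defs
  imports "HOL-Analysis.Analysis"
begin

type_synonym 'n pt = "real ^ 'n"
type_synonym 'n pp = "(real ^ 'n) \<times> (real ^ 'n)"

definition has_pderiv :: "('b::real_normed_vector \<Rightarrow> real) \<Rightarrow> 'b \<Rightarrow> 'b \<Rightarrow> real \<Rightarrow> bool" where
  "has_pderiv F v z D \<longleftrightarrow> ((\<lambda>t. F (z + t *\<^sub>R v)) has_real_derivative D) (at 0)"

definition pderiv :: "('b::real_normed_vector \<Rightarrow> real) \<Rightarrow> 'b \<Rightarrow> 'b \<Rightarrow> real" where
  "pderiv F v z = deriv (\<lambda>t. F (z + t *\<^sub>R v)) 0"

definition C2_on :: "'b::euclidean_space set \<Rightarrow> ('b \<Rightarrow> real) \<Rightarrow> bool" where
  "C2_on U F \<longleftrightarrow> open U \<and> continuous_on U F \<and>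
     (\<forall>b1\<in>Basis. (\<forall>z\<in>U. has_pderiv F b1 z (pderiv F b1 z)) \<and> continuous_on U (pderiv F b1) \<and>
        (\<forall>b2\<in>Basis. (\<forall>z\<in>U. has_pderiv (pderiv F b1) b2 z (pderiv (pderiv F b1) b2 z)) \<and>
                    continuous_on U (pderiv (pderiv F b1) b2)))"

text \<open>Mixed Hessian D^2_{xy} c (x,y) = (d^2 c / dx_i dy_j)_{i,j}.\<close>
definition mixed_hess :: "('n::finite pp \<Rightarrow> real) \<Rightarrow> 'n pt \<Rightarrow> 'n pt \<Rightarrow> real ^ 'n ^ 'n" where
  "mixed_hess c x y = (\<chi> i j. pderiv (pderiv c (0, axis j 1)) (axis i 1, 0) (x, y))"

definition cost_assms :: "('n::finite pp \<Rightarrow> real) \<Rightarrow> bool" where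
  "cost_assms c \<longleftrightarrow>
     (\<exists>M. \<forall>z. \<bar>c z\<bar> \<le> M) \<and>
     (\<exists>Z. closed Z \<and> Z \<in> null_sets lebesgue \<and> C2_on (- Z) c \<and>
          (\<forall>x y. (x, y) \<notin> Z \<longrightarrow> det (mixed_hess c x y) \<noteq> 0))"

definition L1c :: "('b::euclidean_space \<Rightarrow> real) \<Rightarrow> bool" where
  "L1c F \<longleftrightarrow> integrable lebesgue F \<and> (\<exists>K. compact K \<and> (AE z in lebesgue. z \<notin> K \<longrightarrow> F z = 0))"

definition Gamma :: "('n::finite pt \<Rightarrow> real) \<Rightarrow> ('n pt \<Rightarrow> real) \<Rightarrow> ('n pp \<Rightarrow> real) set" where
  "Gamma f g = {h. L1c h \<and> (AE z in lebesgue. 0 \<le> h z) \<and>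
      (AE x in lebesgue. (\<integral>y. h (x, y) \<partial>lebesgue) = f x) \<and>
      (AE y in lebesgue. (\<integral>x. h (x, y) \<partial>lebesgue) = g y)}"

definition Gamma_bd :: "('n::finite pt \<Rightarrow> real) \<Rightarrow> ('n pt \<Rightarrow> real) \<Rightarrow> ('n pp \<Rightarrow> real) \<Rightarrow> ('n pp \<Rightarrow> real) set" where
  "Gamma_bd f g hb = {h \<in> Gamma f g. AE z in lebesgue. h z \<le> hb z}"

definition I_c :: "('n::finite pp \<Rightarrow> real) \<Rightarrow> ('n pp \<Rightarrow> real) \<Rightarrow> real" where
  "I_c c h = (\<integral>z. c z * h z \<partial>lebesgue)"

definition geom_extreme :: "('n::finite pp \<Rightarrow> real) \<Rightarrow> ('n pp \<Rightarrow> real) \<Rightarrow> bool" where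
  "geom_extreme hb h \<longleftrightarrow> (\<exists>W \<in> sets lebesgue. AE z in lebesgue. h z = hb z * indicator W z)"

end

theory Submission
  imports Defs
begin

lemma pderiv_line:
  fixes F :: "'a::real_normed_vector \<Rightarrow> real"
  assumes "has_pderiv F v (w + t *\<^sub>R v) D"
  shows "((\<lambda>s. F (w + s *\<^sub>R v)) has_real_derivative D) (at t)"
proof -
  have "((\<lambda>s. F ((w + t *\<^sub>R v) + s *\<^sub>R v)) has_real_derivative D) (at 0)"
    using assms by (simp add: has_pderiv_def)
  moreover have "(\<lambda>s. F ((w + t *\<^sub>R v) + s *\<^sub>R v)) = (\<lambda>x. (\<lambda>s. F (w + s *\<^sub>R v)) (x + t))"
    by (rule ext) (simp add: algebra_simps)
  ultimately show ?thesis
    using DERIV_shift[of "\<lambda>s. F (w + s *\<^sub>R v)" D 0 t] by simp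
qed

lemma cross_mvt:
  fixes F G H :: "'a::real_normed_vector \<Rightarrow> real"
  assumes dG: "\<And>w. w \<in> U \<Longrightarrow> has_pderiv F e2 w (G w)"
    and dH: "\<And>w. w \<in> U \<Longrightarrow> has_pderiv G e1 w (H w)"
    and ep: "\<epsilon> > 0"
    and inU: "\<And>s t. 0 \<le> s \<Longrightarrow> s \<le> \<epsilon> \<Longrightarrow> 0 \<le> t \<Longrightarrow> t \<le> \<epsilon> \<Longrightarrow> z + s *\<^sub>R e1 + t *\<^sub>R e2 \<in> U"
  shows "\<exists>s t. 0 \<le> s \<and> s \<le> \<epsilon> \<and> 0 \<le> t \<and> t \<le> \<epsilon> \<and>
     F (z + \<epsilon> *\<^sub>R e1 + \<epsilon> *\<^sub>R e2) - F (z + \<epsilon> *\<^sub>R e1) - F (z + \<epsilon> *\<^sub>R e2) + F z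
       = \<epsilon>\<^sup>2 * H (z + s *\<^sub>R e1 + t *\<^sub>R e2)"
proof -
  define p where "p t = F (z + \<epsilon> *\<^sub>R e1 + t *\<^sub>R e2) - F (z + t *\<^sub>R e2)" for t
  have "DERIV p t :> G (z + \<epsilon> *\<^sub>R e1 + t *\<^sub>R e2) - G (z + t *\<^sub>R e2)"
    if "0 \<le> t" "t \<le> \<epsilon>" for t
  proof -
    have "z + \<epsilon> *\<^sub>R e1 + t *\<^sub>R e2 \<in> U" using inU[of \<epsilon> t] that ep by simp
    then have d1: "((\<lambda>s. F ((z + \<epsilon> *\<^sub>R e1) + s *\<^sub>R e2)) has_real_derivative G (z + \<epsilon> *\<^sub>R e1 + t *\<^sub>R e2)) (at t)"
      by (intro pderiv_line) (simp add: dG)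
    have "z + t *\<^sub>R e2 \<in> U" using inU[of 0 t] that ep by simp
    then have d2: "((\<lambda>s. F (z + s *\<^sub>R e2)) has_real_derivative G (z + t *\<^sub>R e2)) (at t)"
      by (intro pderiv_line) (simp add: dG)
    show ?thesis unfolding p_def using DERIV_diff[OF d1 d2] by simp
  qed
  from MVT2[OF ep this] obtain t0 where t0: "0 < t0" "t0 < \<epsilon>"
    and pe: "p \<epsilon> - p 0 = (\<epsilon> - 0) * (G (z + \<epsilon> *\<^sub>R e1 + t0 *\<^sub>R e2) - G (z + t0 *\<^sub>R e2))"
    by auto
  define q where "q s = G (z + t0 *\<^sub>R e2 + s *\<^sub>R e1)" for s
  have "DERIV q s :> H (z + t0 *\<^sub>R e2 + s *\<^sub>R e1)" if "0 \<le> s" "s \<le> \<epsilon>" for s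
  proof -
    have "z + t0 *\<^sub>R e2 + s *\<^sub>R e1 \<in> U" using inU[of s t0] that t0 by (simp add: algebra_simps)
    then show ?thesis unfolding q_def by (intro pderiv_line) (simp add: dH)
  qed
  from MVT2[OF ep this] obtain s0 where s0: "0 < s0" "s0 < \<epsilon>"
    and qe: "q \<epsilon> - q 0 = (\<epsilon> - 0) * H (z + t0 *\<^sub>R e2 + s0 *\<^sub>R e1)"
    by auto
  have "F (z + \<epsilon> *\<^sub>R e1 + \<epsilon> *\<^sub>R e2) - F (z + \<epsilon> *\<^sub>R e1) - F (z + \<epsilon> *\<^sub>R e2) + F z = p \<epsilon> - p 0"
    by (simp add: p_def)
  also have "\<dots> = \<epsilon> * (q \<epsilon> - q 0)" using pe by (simp add: q_def algebra_simps)
  also have "\<dots> = \<epsilon>\<^sup>2 * H (z + s0 *\<^sub>R e1 + t0 *\<^sub>R e2)" using qe by (simp add: power2_eq_square algebra_simps)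
  finally show ?thesis using s0 t0 by (intro exI[of _ s0] exI[of _ t0]) auto
qed

lemma basis_e1: "((axis i 1, 0) :: 'n::finite pp) \<in> Basis"
  by (auto simp: Basis_prod_def)
lemma basis_e2: "((0, axis j 1) :: 'n::finite pp) \<in> Basis"
  by (auto simp: Basis_prod_def)

lemma local_sign:
  fixes c :: "'n::finite pp \<Rightarrow> real"
  assumes C2: "C2_on (-Z) c" and det: "\<forall>x y. (x,y)\<notin>Z \<longrightarrow> det (mixed_hess c x y) \<noteq> 0"
    and z: "z \<notin> Z"
  shows "\<exists>i j \<sigma> r. r > 0 \<and> \<sigma> \<in> {-1,1::real} \<and> ball z r \<subseteq> -Z \<and>
     (\<forall>w\<in>ball z r. \<sigma> * pderiv (pderiv c (0, axis j 1)) (axis i 1, 0) w > 0)"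
proof -
  obtain x y where xy: "z = (x,y)" by (cases z)
  have "det (mixed_hess c x y) \<noteq> 0" using det z xy by auto
  then have "row undefined (mixed_hess c x y) \<noteq> 0" using det_zero_row(1) by blast
  then obtain j where "mixed_hess c x y $ undefined $ j \<noteq> 0"
    by (auto simp: row_def vec_eq_iff)
  then obtain i where Hne: "pderiv (pderiv c (0, axis j 1)) (axis i 1, 0) z \<noteq> 0"
    by (auto simp: mixed_hess_def xy)
  define H where "H = pderiv (pderiv c (0, axis j 1)) (axis i 1, 0)"
  have op: "open (-Z)" using C2 by (simp add: C2_on_def)
  have "continuous_on (-Z) H"
    using C2 basis_e1[of i] basis_e2[of j] unfolding C2_on_def H_def by blast
  then have "isCont H z" using op z continuous_on_eq_continuous_at by blast
  then obtain d where d: "d > 0" "\<And>w. dist w z < d \<Longrightarrow> dist (H w) (H z) < \<bar>H z\<bar>"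
    using Hne unfolding continuous_at_eps_delta H_def by (metis zero_less_abs_iff)
  obtain e where e: "e > 0" "ball z e \<subseteq> -Z" using op z open_contains_ball by blast
  define \<sigma> where "\<sigma> = (if H z > 0 then 1 else -1::real)"
  show ?thesis
  proof (intro exI conjI)
    show "min d e > 0" using d e by simp
    show "\<sigma> \<in> {-1,1}" by (simp add: \<sigma>_def)
    show "ball z (min d e) \<subseteq> -Z" using e by auto
    show "\<forall>w\<in>ball z (min d e). \<sigma> * pderiv (pderiv c (0, axis j 1)) (axis i 1, 0) w > 0"
    proof
      fix w assume "w \<in> ball z (min d e)"
      then have "dist (H w) (H z) < \<bar>H z\<bar>" using d by (auto simp: dist_commute)
      then show "\<sigma> * pderiv (pderiv c (0, axis j 1)) (axis i 1, 0) w > 0"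
        unfolding H_def[symmetric] \<sigma>_def dist_real_def by (auto split: if_splits)
    qed
  qed
qed

definition Hc :: "('n::finite pp \<Rightarrow> real) \<Rightarrow> 'n \<Rightarrow> 'n \<Rightarrow> 'n pp \<Rightarrow> real" where
  "Hc c i j = pderiv (pderiv c (0, axis j 1)) (axis i 1, 0)"

lemma find_ball:
  fixes c :: "'n::finite pp \<Rightarrow> real"
  assumes C2: "C2_on (-Z) c" and det: "\<forall>x y. (x,y)\<notin>Z \<longrightarrow> det (mixed_hess c x y) \<noteq> 0"
    and Zn: "Z \<in> null_sets lebesgue"
    and S: "S \<in> sets lebesgue" "S \<notin> null_sets lebesgue"
  shows "\<exists>w \<rho> i j \<sigma>. \<rho> > 0 \<and> \<sigma> \<in> {-1,1::real} \<and> ball w (2*\<rho>) \<subseteq> -Z \<and>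
     (\<forall>u\<in>ball w (2*\<rho>). \<sigma> * Hc c i j u > 0) \<and> S \<inter> ball w \<rho> \<notin> null_sets lebesgue"
proof (rule ccontr)
  assume neg: "\<not> ?thesis"
  define P where "P w \<rho> \<longleftrightarrow> \<rho> > 0 \<and> (\<exists>i j \<sigma>. \<sigma> \<in> {-1,1::real} \<and> ball w (2*\<rho>) \<subseteq> -Z \<and>
     (\<forall>u\<in>ball w (2*\<rho>). \<sigma> * Hc c i j u > 0))" for w :: "'n pp" and \<rho>
  define F where "F = {ball w \<rho> | w \<rho>. P w \<rho>}"
  have nullB: "S \<inter> B \<in> null_sets lebesgue" if "B \<in> F" for B
    using that neg unfolding F_def P_def by blast
  have cov: "-Z \<subseteq> \<Union>F"
  proof
    fix z assume "z \<in> -Z"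
    then obtain i j \<sigma> r where r: "r > 0" "\<sigma> \<in> {-1,1::real}" "ball z r \<subseteq> -Z"
      "\<forall>w\<in>ball z r. \<sigma> * pderiv (pderiv c (0, axis j 1)) (axis i 1, 0) w > 0"
      using local_sign[OF C2 det] by blast
    have "P z (r/2)" unfolding P_def Hc_def using r by auto
    then have "ball z (r/2) \<in> F" unfolding F_def by blast
    moreover have "z \<in> ball z (r/2)" using r by simp
    ultimately show "z \<in> \<Union>F" by blast
  qed
  obtain F' where F': "F' \<subseteq> F" "countable F'" "\<Union>F' = \<Union>F"
    using Lindelof[of F] unfolding F_def by blast
  have "(\<Union>B\<in>F'. S \<inter> B) \<in> null_sets lebesgue"
    using F' nullB by (intro null_sets_UN') auto
  then have "Z \<union> (\<Union>B\<in>F'. S \<inter> B) \<in> null_sets lebesgue" using Zn by auto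
  moreover have "S \<subseteq> Z \<union> (\<Union>B\<in>F'. S \<inter> B)" using cov F' by auto
  ultimately have "S \<in> null_sets lebesgue" using S null_sets_subset by blast
  then show False using S by simp
qed

lemma pos_measure:
  assumes "S \<in> lmeasurable" "S \<notin> null_sets lebesgue"
  shows "measure lebesgue S > 0"
proof (rule ccontr)
  assume "\<not> ?thesis"
  then have "measure lebesgue S = 0" using measure_nonneg[of lebesgue S] by linarith
  then have "emeasure lebesgue S = 0" using emeasure_eq_measure2[OF assms(1)] by simp
  then show False using assms by (auto simp: null_sets_def)
qed

lemma transl_eq: "(+) (-v) ` T = {z. z + v \<in> T}" for v :: "'a::ab_group_add"
  by (auto simp: image_iff) (metis add.commute add_diff_cancel_right' diff_conv_add_uminus)

lemma perturb_set:
  fixes c :: "'n::finite pp \<Rightarrow> real"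
  assumes C2: "C2_on (-Z) c" and det: "\<forall>x y. (x,y)\<notin>Z \<longrightarrow> det (mixed_hess c x y) \<noteq> 0"
    and Zn: "Z \<in> null_sets lebesgue"
    and S: "S \<in> sets lebesgue" "S \<notin> null_sets lebesgue"
  shows "\<exists>E a b \<sigma>. compact E \<and> measure lebesgue E > 0 \<and> \<sigma> \<in> {-1,1::real} \<and>
     (\<forall>z\<in>E. z \<in> S \<and> z + (a,0) \<in> S \<and> z + (0,b) \<in> S \<and> z + (a,b) \<in> S) \<and>
     (\<forall>z\<in>E. \<sigma> * (c (z + (a,b)) - c (z + (a,0)) - c (z + (0,b)) + c z) > 0)"
proof -
  obtain w \<rho> i j \<sigma> where \<rho>: "\<rho> > 0" and \<sigma>: "\<sigma> \<in> {-1,1::real}" and B2: "ball w (2*\<rho>) \<subseteq> -Z"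
    and sgn: "\<forall>u\<in>ball w (2*\<rho>). \<sigma> * Hc c i j u > 0" and nn: "S \<inter> ball w \<rho> \<notin> null_sets lebesgue"
    using find_ball[OF C2 det Zn S] by blast
  define S' where "S' = S \<inter> ball w \<rho>"
  have S'l: "S' \<in> lmeasurable" unfolding S'_def
    by (intro bounded_set_imp_lmeasurable) (auto simp: S)
  define m where "m = measure lebesgue S'"
  have m: "m > 0" unfolding m_def using pos_measure[OF S'l] nn S'_def by simp
  define \<eta> where "\<eta> = m / 8"
  have \<eta>: "\<eta> > 0" using m by (simp add: \<eta>_def)
  obtain T where T: "closed T" "T \<subseteq> S'" "S' - T \<in> lmeasurable" "emeasure lebesgue (S' - T) < ennreal \<eta>"
    using sets_lebesgue_inner_closed[of S' \<eta>] S'l \<eta> by blast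
  obtain U where U: "open U" "S' \<subseteq> U" "U - S' \<in> lmeasurable" "emeasure lebesgue (U - S') < ennreal \<eta>"
    using sets_lebesgue_outer_open[of S' \<eta>] S'l \<eta> by blast
  have Tb: "T \<subseteq> ball w \<rho>" using T S'_def by auto
  have K: "compact T" using T Tb by (meson bounded_ball bounded_subset compact_eq_bounded_closed)
  have mST: "measure lebesgue (S' - T) < \<eta>"
    using T(3,4) \<eta> by (simp add: emeasure_eq_measure2 ennreal_less_iff)
  have mUS: "measure lebesgue (U - S') < \<eta>"
    using U(3,4) \<eta> by (simp add: emeasure_eq_measure2 ennreal_less_iff)
  have UT: "U - T = (U - S') \<union> (S' - T)" using T U by auto
  have UTl: "U - T \<in> lmeasurable" using UT T U by auto
  have mUT: "measure lebesgue (U - T) < 2 * \<eta>"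
    using UT measure_Un_le[of "U - S'" lebesgue "S' - T"] T U mST mUS
    using mST mUS T(3) U(3) by (auto dest: fmeasurableD)
  have mT: "measure lebesgue T > m - \<eta>"
  proof -
    have "S' = T \<union> (S' - T)" using T by auto
    then have "m \<le> measure lebesgue T + measure lebesgue (S' - T)"
      unfolding m_def using measure_Un_le[of T lebesgue "S' - T"] T K lmeasurable_compact
      by (metis fmeasurableD)
    then show ?thesis using mST by linarith
  qed
  obtain \<delta>0 where \<delta>0: "\<delta>0 > 0" "\<forall>x\<in>T. \<forall>y\<in>-U. \<delta>0 \<le> dist x y"
    using separate_compact_closed[OF K, of "-U"] U T by auto
  define \<epsilon> where "\<epsilon> = min \<delta>0 \<rho> / 4"
  have \<epsilon>: "\<epsilon> > 0" "4 * \<epsilon> \<le> \<delta>0" "4 * \<epsilon> \<le> \<rho>" using \<delta>0 \<rho> by (auto simp: \<epsilon>_def)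
  define e1 :: "'n pp" where "e1 = (axis i 1, 0)"
  define e2 :: "'n pp" where "e2 = (0, axis j 1)"
  define a :: "'n pt" where "a = \<epsilon> *\<^sub>R axis i 1"
  define b :: "'n pt" where "b = \<epsilon> *\<^sub>R axis j 1"
  have v1: "(a,0) = \<epsilon> *\<^sub>R e1" and v2: "(0,b) = \<epsilon> *\<^sub>R e2" and v3: "(a,b) = \<epsilon> *\<^sub>R e1 + \<epsilon> *\<^sub>R e2"
    by (simp_all add: a_def b_def e1_def e2_def)
  have ne1: "norm e1 = 1" and ne2: "norm e2 = 1"
    by (simp_all add: e1_def e2_def)
  have nv: "norm (s *\<^sub>R e1 + t *\<^sub>R e2) \<le> 2 * \<epsilon>" if "0 \<le> s" "s \<le> \<epsilon>" "0 \<le> t" "t \<le> \<epsilon>" for s t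
  proof -
    have "norm (s *\<^sub>R e1 + t *\<^sub>R e2) \<le> norm (s *\<^sub>R e1) + norm (t *\<^sub>R e2)" by (rule norm_triangle_ineq)
    also have "\<dots> = s + t" using that ne1 ne2 by simp
    finally show ?thesis using that by simp
  qed
  define V where "V = {(a,0), (0,b), (a,b)}"
  have Vn: "norm v < \<delta>0" if "v \<in> V" for v
    using that nv[of \<epsilon> 0] nv[of 0 \<epsilon>] nv[of \<epsilon> \<epsilon>] \<epsilon> ne1 ne2 unfolding V_def v1 v2 v3 by auto
  define E where "E = T \<inter> ((+) (-(a,0))) ` T \<inter> ((+) (-(0,b))) ` T \<inter> ((+) (-(a,b))) ` T"
  have Ec: "compact E" unfolding E_def
    by (intro compact_Int compact_translation K)
  have Emem: "z + v \<in> T" if "z \<in> E" "v \<in> V" for z v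
    using that unfolding E_def V_def by auto
  have ET: "E \<subseteq> T" unfolding E_def by auto
  define A where "A v = (+) (-v) ` (U - T)" for v :: "'n pp"
  have Al: "A v \<in> lmeasurable" for v unfolding A_def using UTl measurable_translation by blast
  have mA: "measure lebesgue (A v) < 2 * \<eta>" for v
    unfolding A_def using mUT measure_translation by metis
  have TE: "T \<subseteq> E \<union> A (a,0) \<union> A (0,b) \<union> A (a,b)"
  proof
    fix z assume z: "z \<in> T"
    have inU: "z + v \<in> U" if "v \<in> V" for v
    proof (rule ccontr)
      assume "z + v \<notin> U"
      then have "\<delta>0 \<le> dist z (z + v)" using \<delta>0 z by auto
      then show False using Vn[OF that] by (simp add: dist_norm)
    qed
    show "z \<in> E \<union> A (a,0) \<union> A (0,b) \<union> A (a,b)"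
    proof (cases "z \<in> E")
      case False
      then have "\<exists>v\<in>V. z + v \<notin> T" using z unfolding E_def V_def
        unfolding transl_eq by auto
      then obtain v where v: "v \<in> V" "z + v \<notin> T" by blast
      then have "z \<in> A v" unfolding A_def using inU[OF v(1)]
        by (auto simp: image_iff intro!: bexI[of _ "z + v"])
      then show ?thesis using v(1) unfolding V_def by auto
    qed simp
  qed
  have El: "E \<in> lmeasurable" using Ec lmeasurable_compact by blast
  have "measure lebesgue T \<le> measure lebesgue (E \<union> A (a,0) \<union> A (0,b) \<union> A (a,b))"
    using TE K El Al[of "(a,0)"] Al[of "(0,b)"] Al[of "(a,b)"] lmeasurable_compact[OF K]
    by (intro measure_mono_fmeasurable fmeasurable.Un) (auto dest: fmeasurableD)
  also have "\<dots> \<le> measure lebesgue E + measure lebesgue (A (a,0)) + measure lebesgue (A (0,b)) + measure lebesgue (A (a,b))"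
  proof -
    have s: "X \<in> sets lebesgue" if "X \<in> lmeasurable" for X using that by (rule fmeasurableD)
    have "measure lebesgue (E \<union> A (a,0) \<union> A (0,b) \<union> A (a,b)) \<le> measure lebesgue (E \<union> A (a,0) \<union> A (0,b)) + measure lebesgue (A (a,b))"
      using El Al by (intro measure_Un_le s fmeasurable.Un) auto
    moreover have "measure lebesgue (E \<union> A (a,0) \<union> A (0,b)) \<le> measure lebesgue (E \<union> A (a,0)) + measure lebesgue (A (0,b))"
      using El Al by (intro measure_Un_le s fmeasurable.Un) auto
    moreover have "measure lebesgue (E \<union> A (a,0)) \<le> measure lebesgue E + measure lebesgue (A (a,0))"
      using El Al by (intro measure_Un_le s fmeasurable.Un) auto
    ultimately show ?thesis by linarith
  qed
  finally have "measure lebesgue T \<le> measure lebesgue E + 6 * \<eta>" using mA[of "(a,0)"] mA[of "(0,b)"] mA[of "(a,b)"] by linarith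
  then have mE: "measure lebesgue E > 0" using mT \<eta>_def m by linarith
  have sg: "\<sigma> * (c (z + (a,b)) - c (z + (a,0)) - c (z + (0,b)) + c z) > 0" if z: "z \<in> E" for z
  proof -
    have zb: "dist w z < \<rho>" using z ET Tb by auto
    have inB: "z + s *\<^sub>R e1 + t *\<^sub>R e2 \<in> ball w (2*\<rho>)"
      if "0 \<le> s" "s \<le> \<epsilon>" "0 \<le> t" "t \<le> \<epsilon>" for s t
    proof -
      have "dist w (z + u) \<le> dist w z + norm u" for u
      proof -
        have "dist w (z + u) \<le> dist w z + dist (z + u) z" by (rule dist_triangle2)
        moreover have "dist (z + u) z = norm u" by (simp add: dist_norm)
        ultimately show ?thesis by simp
      qed
      then have "dist w (z + s *\<^sub>R e1 + t *\<^sub>R e2) \<le> dist w z + norm (s *\<^sub>R e1 + t *\<^sub>R e2)"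
        by (simp only: add.assoc)
      then show ?thesis using nv[OF that] zb \<epsilon> by simp
    qed
    have C2': "\<forall>b1\<in>Basis. (\<forall>z\<in>-Z. has_pderiv c b1 z (pderiv c b1 z)) \<and>
        (\<forall>b2\<in>Basis. (\<forall>z\<in>-Z. has_pderiv (pderiv c b1) b2 z (pderiv (pderiv c b1) b2 z)))"
      using C2 unfolding C2_on_def by blast
    have dG: "has_pderiv c e2 u (pderiv c e2 u)" if "u \<in> ball w (2*\<rho>)" for u
      using C2' basis_e2[of j] B2 that unfolding e2_def by blast
    have dH: "has_pderiv (pderiv c e2) e1 u (Hc c i j u)" if "u \<in> ball w (2*\<rho>)" for u
      using C2' basis_e2[of j] basis_e1[of i] B2 that unfolding e2_def e1_def Hc_def by blast
    obtain s t where st: "0 \<le> s" "s \<le> \<epsilon>" "0 \<le> t" "t \<le> \<epsilon>"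
      and eq: "c (z + \<epsilon> *\<^sub>R e1 + \<epsilon> *\<^sub>R e2) - c (z + \<epsilon> *\<^sub>R e1) - c (z + \<epsilon> *\<^sub>R e2) + c z
       = \<epsilon>\<^sup>2 * Hc c i j (z + s *\<^sub>R e1 + t *\<^sub>R e2)"
      using cross_mvt[where F=c and G="pderiv c e2" and H="Hc c i j" and U="ball w (2*\<rho>)",
          OF dG dH \<epsilon>(1) inB] by blast
    have "\<sigma> * Hc c i j (z + s *\<^sub>R e1 + t *\<^sub>R e2) > 0" using sgn inB[OF st] by blast
    then have "\<sigma> * (\<epsilon>\<^sup>2 * Hc c i j (z + s *\<^sub>R e1 + t *\<^sub>R e2)) > 0"
      using \<epsilon> by (metis mult.left_commute mult_pos_pos zero_less_power)
    then show ?thesis using eq by (simp add: v1 v2 v3 add.assoc)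
  qed
  show ?thesis
  proof (intro exI conjI ballI)
    show "compact E" by fact
    show "measure lebesgue E > 0" by fact
    show "\<sigma> \<in> {-1,1}" by fact
    fix z assume z: "z \<in> E"
    have "T \<subseteq> S" using T S'_def by auto
    then show "z \<in> S" "z + (a,0) \<in> S" "z + (0,b) \<in> S" "z + (a,b) \<in> S"
      using Emem[OF z] z ET unfolding V_def by auto
    show "\<sigma> * (c (z + (a,b)) - c (z + (a,0)) - c (z + (0,b)) + c z) > 0" using sg[OF z] .
  qed
qed

lemma img_eq: "(+) v ` E = {z. z - v \<in> E}" for v :: "'a::ab_group_add"
  by (auto simp: image_iff) (metis add.commute diff_add_cancel)

lemma cont_lebesgue_meas:
  fixes c :: "'a::euclidean_space \<Rightarrow> real"
  assumes "continuous_on UNIV c"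
  shows "c \<in> borel_measurable lebesgue"
proof -
  have "c \<in> borel_measurable borel" using assms by (rule borel_measurable_continuous_onI)
  then have "c \<in> borel_measurable lborel" by simp
  then show ?thesis by (rule measurable_completion)
qed

lemma lmeas_integrable_ind:
  "A \<in> lmeasurable \<Longrightarrow> integrable lebesgue (indicator A :: _ \<Rightarrow> real)"
  by (rule integrable_real_indicator) (auto simp: fmeasurable_def)

lemma integrable_c_ind:
  fixes c :: "'a::euclidean_space \<Rightarrow> real"
  assumes "A \<in> lmeasurable" "c \<in> borel_measurable lebesgue" "\<And>z. \<bar>c z\<bar> \<le> M"
  shows "integrable lebesgue (\<lambda>z. c z * indicator A z)"
proof -
  have i: "integrable lebesgue (\<lambda>z. M * indicator A z)"
    using lmeas_integrable_ind[OF assms(1)] by simp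
  have m: "(\<lambda>z. c z * indicator A z) \<in> borel_measurable lebesgue"
    using assms(1,2) by (intro borel_measurable_times borel_measurable_indicator) (auto dest: fmeasurableD)
  have "M \<ge> 0" using assms(3)[of undefined] by simp
  then have ae: "AE x in lebesgue. norm (c x * indicator A x) \<le> norm (M * indicator A x)"
    using assms(3) by (auto simp: indicator_def)
  show ?thesis by (rule Bochner_Integration.integrable_bound[OF i m ae])
qed

lemma integral_add_zero:
  fixes f g :: "'a \<Rightarrow> real"
  assumes g: "integrable M g" and g0: "(\<integral>y. g y \<partial>M) = 0"
  shows "(\<integral>y. f y + g y \<partial>M) = (\<integral>y. f y \<partial>M)"
proof (cases "integrable M f")
  case True
  then show ?thesis using g g0 by simp
next
  case False
  have "\<not> integrable M (\<lambda>y. f y + g y)"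
  proof
    assume "integrable M (\<lambda>y. f y + g y)"
    then have "integrable M (\<lambda>y. (f y + g y) - g y)" using g by (rule Bochner_Integration.integrable_diff)
    then show False using False by simp
  qed
  then show ?thesis using False by (simp add: not_integrable_integral_eq)
qed

lemma sec_lmeas1:
  fixes E :: "('a::euclidean_space \<times> 'b::euclidean_space) set" and x :: 'a
  assumes E: "compact E"
  shows "{y. (x,y) \<in> E} \<in> lmeasurable"
proof -
  have eq: "{y. (x,y) \<in> E} = Pair x -` E" by (simp add: vimage_def)
  have "continuous_on UNIV (Pair x :: 'b \<Rightarrow> _)" by (rule continuous_on_Pair[OF continuous_on_const continuous_on_id])
  then have cl: "closed (Pair x -` E)" by (rule closed_vimage[OF compact_imp_closed[OF E]])
  have sub: "Pair x -` E \<subseteq> snd ` E"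
  proof
    fix y assume "y \<in> Pair x -` E"
    then have "(x,y) \<in> E" by simp
    then show "y \<in> snd ` E" by (rule image_eqI[rotated]) simp
  qed
  have "compact (snd ` E)" by (rule compact_continuous_image[OF continuous_on_snd[OF continuous_on_id] E])
  then have "bounded (snd ` E)" by (rule compact_imp_bounded)
  then have bd: "bounded (Pair x -` E)" using sub by (rule bounded_subset)
  have "Pair x -` E \<in> sets lebesgue" using cl by (simp add: borel_closed)
  then show ?thesis unfolding eq using bd by (intro bounded_set_imp_lmeasurable)
qed

lemma sec_lmeas2:
  fixes E :: "('a::euclidean_space \<times> 'b::euclidean_space) set" and x :: 'b
  assumes E: "compact E"
  shows "{y. (y,x) \<in> E} \<in> lmeasurable"
proof -
  have eq: "{y. (y,x) \<in> E} = (\<lambda>y. (y,x)) -` E" by (simp add: vimage_def)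
  have "continuous_on UNIV (\<lambda>y::'a. (y,x))" by (rule continuous_on_Pair[OF continuous_on_id continuous_on_const])
  then have cl: "closed ((\<lambda>y. (y,x)) -` E)" by (rule closed_vimage[OF compact_imp_closed[OF E]])
  have sub: "(\<lambda>y. (y,x)) -` E \<subseteq> fst ` E"
  proof
    fix y assume "y \<in> (\<lambda>y. (y,x)) -` E"
    then have "(y,x) \<in> E" by simp
    then show "y \<in> fst ` E" by (rule image_eqI[rotated]) simp
  qed
  have "compact (fst ` E)" by (rule compact_continuous_image[OF continuous_on_fst[OF continuous_on_id] E])
  then have "bounded (fst ` E)" by (rule compact_imp_bounded)
  then have bd: "bounded ((\<lambda>y. (y,x)) -` E)" using sub by (rule bounded_subset)
  have "(\<lambda>y. (y,x)) -` E \<in> sets lebesgue" using cl by (simp add: borel_closed)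
  then show ?thesis unfolding eq using bd by (intro bounded_set_imp_lmeasurable)
qed

lemma trans_int:
  fixes c :: "'a::euclidean_space \<Rightarrow> real"
  assumes c: "continuous_on UNIV c" and E: "compact E"
  shows "(\<integral>z. c z * indicator ((+) v ` E) z \<partial>lebesgue) = (\<integral>z. c (z + v) * indicator E z \<partial>lebesgue)"
proof -
  have cb: "c \<in> borel_measurable borel" using c by (rule borel_measurable_continuous_onI)
  have Eb: "E \<in> sets borel" using E by (simp add: borel_compact)
  have Evb: "(+) v ` E \<in> sets borel" using E by (simp add: borel_compact compact_translation)
  have m1: "(\<lambda>z. c z * indicator ((+) v ` E) z) \<in> borel_measurable lborel"
    using cb Evb by simp
  have m2: "(\<lambda>z. c (z + v) * indicator E z) \<in> borel_measurable lborel"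
  proof -
    have "(\<lambda>z. c (z + v)) \<in> borel_measurable borel"
      by (intro borel_measurable_continuous_onI continuous_on_compose2[OF c]) (auto intro!: continuous_intros)
    then show ?thesis using Eb by simp
  qed
  have "(\<integral>z. c z * indicator ((+) v ` E) z \<partial>lebesgue) = (\<integral>z. c z * indicator ((+) v ` E) z \<partial>lborel)"
    using m1 by (rule integral_completion)
  also have "\<dots> = (\<integral>z. c z * indicator ((+) v ` E) z \<partial>(distr lborel borel ((+) v)))"
    by (simp add: lborel_distr_plus)
  also have "\<dots> = (\<integral>z. c (v + z) * indicator ((+) v ` E) (v + z) \<partial>lborel)"
    using cb Evb by (subst integral_distr) auto
  also have "\<dots> = (\<integral>z. c (z + v) * indicator E z \<partial>lborel)"
    by (intro Bochner_Integration.integral_cong) (auto simp: indicator_def add.commute image_iff)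
  also have "\<dots> = (\<integral>z. c (z + v) * indicator E z \<partial>lebesgue)"
    using m2 by (rule integral_completion[symmetric])
  finally show ?thesis .
qed

theorem theorem7p2:
  fixes c :: "'n::finite pp \<Rightarrow> real"
    and hb :: "'n pp \<Rightarrow> real"
    and f g :: "'n pt \<Rightarrow> real"
    and h :: "'n pp \<Rightarrow> real"
  assumes "continuous_on UNIV c"
    and "cost_assms c"
    and "hb \<in> borel_measurable lebesgue"
    and "AE z in lebesgue. 0 \<le> hb z"
    and "\<exists>M. AE z in lebesgue. \<bar>hb z\<bar> \<le> M"
    and "\<exists>K. compact K \<and> (AE z in lebesgue. z \<notin> K \<longrightarrow> hb z = 0)"
    and "L1c f" and "AE x in lebesgue. 0 \<le> f x"
    and "L1c g" and "AE y in lebesgue. 0 \<le> g y"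
    and "Gamma_bd f g hb \<noteq> {}"
    and "h \<in> Gamma_bd f g hb"
    and "\<forall>h' \<in> Gamma_bd f g hb. I_c c h \<le> I_c c h'"
  shows "geom_extreme hb h"
proof (rule ccontr)
  assume ne: "\<not> geom_extreme hb h"
  note cont = assms(1)
  obtain Mc where Mc: "\<And>z. \<bar>c z\<bar> \<le> Mc" using assms(2) unfolding cost_assms_def by blast
  obtain Z where Z: "closed Z" "Z \<in> null_sets lebesgue" "C2_on (-Z) c"
      "\<forall>x y. (x,y)\<notin>Z \<longrightarrow> det (mixed_hess c x y) \<noteq> 0"
    using assms(2) unfolding cost_assms_def by blast
  have hG: "L1c h" "AE z in lebesgue. 0 \<le> h z" "AE x in lebesgue. (\<integral>y. h (x, y) \<partial>lebesgue) = f x"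
     "AE y in lebesgue. (\<integral>x. h (x, y) \<partial>lebesgue) = g y" "AE z in lebesgue. h z \<le> hb z"
    using assms(12) unfolding Gamma_bd_def Gamma_def by auto
  have hint: "integrable lebesgue h" using hG(1) by (simp add: L1c_def)
  obtain Kh where Kh: "compact Kh" "AE z in lebesgue. z \<notin> Kh \<longrightarrow> h z = 0"
    using hG(1) by (auto simp: L1c_def)
  have hm[measurable]: "h \<in> borel_measurable lebesgue" using hint by (rule borel_measurable_integrable)
  have hbm[measurable]: "hb \<in> borel_measurable lebesgue" by (rule assms(3))
  define N where "N = {z. 0 < h z \<and> h z < hb z}"
  have "{z \<in> space lebesgue. 0 < h z \<and> h z < hb z} \<in> sets lebesgue" by measurable
  then have Nm: "N \<in> sets lebesgue" by (simp add: N_def)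
  have Nnn: "N \<notin> null_sets lebesgue"
  proof
    assume "N \<in> null_sets lebesgue"
    then have "AE z in lebesgue. z \<notin> N" by (rule AE_not_in)
    then have "AE z in lebesgue. h z = hb z * indicator {z. 0 < h z} z"
      using hG(2) hG(5) by eventually_elim (auto simp: N_def indicator_def)
    moreover have "{z \<in> space lebesgue. 0 < h z} \<in> sets lebesgue" by measurable
    ultimately show False using ne unfolding geom_extreme_def by auto
  qed
  define Sn where "Sn n = {z. 1 / real (Suc n) \<le> h z \<and> h z \<le> hb z - 1 / real (Suc n)}" for n
  have Snm: "Sn n \<in> sets lebesgue" for n
  proof -
    have "{z \<in> space lebesgue. 1 / real (Suc n) \<le> h z \<and> h z \<le> hb z - 1 / real (Suc n)} \<in> sets lebesgue"
      by measurable
    then show ?thesis by (simp add: Sn_def)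
  qed
  have NS: "N \<subseteq> (\<Union>n. Sn n)"
  proof
    fix z assume "z \<in> N"
    then have p: "0 < min (h z) (hb z - h z)" by (auto simp: N_def)
    obtain n where "inverse (real (Suc n)) < min (h z) (hb z - h z)"
      using reals_Archimedean[OF p] by blast
    then have "z \<in> Sn n" by (auto simp: Sn_def inverse_eq_divide)
    then show "z \<in> (\<Union>n. Sn n)" by blast
  qed
  obtain n where Sn: "Sn n \<notin> null_sets lebesgue"
  proof (rule ccontr)
    assume "\<not> thesis"
    then have "\<And>n. Sn n \<in> null_sets lebesgue" using that by blast
    then have "(\<Union>n. Sn n) \<in> null_sets lebesgue" by (rule null_sets_UN)
    then have "N \<in> null_sets lebesgue" using NS Nm null_sets_subset by blast
    then show False using Nnn by simp
  qed
  define \<delta> where "\<delta> = 1 / real (Suc n)"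
  define S where "S = Sn n"
  have dpos: "\<delta> > 0" by (simp add: \<delta>_def)
  have hS: "\<delta> \<le> h z \<and> h z \<le> hb z - \<delta>" if "z \<in> S" for z
    using that by (simp add: S_def Sn_def \<delta>_def)
  obtain E a b \<sigma> where E: "compact E" "measure lebesgue E > 0" "\<sigma> \<in> {-1,1::real}"
     and ES: "\<forall>z\<in>E. z \<in> S \<and> z + (a,0) \<in> S \<and> z + (0,b) \<in> S \<and> z + (a,b) \<in> S"
     and Esg: "\<forall>z\<in>E. \<sigma> * (c (z + (a,b)) - c (z + (a,0)) - c (z + (0,b)) + c z) > 0"
    using perturb_set[OF Z(3) Z(4) Z(2) Snm Sn] unfolding S_def by blast
  define E1 where "E1 = (+) (a,0) ` E"
  define E2 where "E2 = (+) (0,b) ` E"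
  define E3 where "E3 = (+) (a,b) ` E"
  have Ec: "compact E1" "compact E2" "compact E3"
    using E(1) by (simp_all add: E1_def E2_def E3_def compact_translation)
  have El: "E \<in> lmeasurable" "E1 \<in> lmeasurable" "E2 \<in> lmeasurable" "E3 \<in> lmeasurable"
    using E(1) Ec by (simp_all add: lmeasurable_compact)
  define \<psi> :: "'n pp \<Rightarrow> real" where "\<psi> z = indicator E z - indicator E1 z - indicator E2 z + indicator E3 z" for z
  define \<kappa> where "\<kappa> = - \<sigma> * \<delta> / 2"
  define h' where "h' z = h z + \<kappa> * \<psi> z" for z
  have inS: "z \<in> S" if "z \<in> E \<union> E1 \<union> E2 \<union> E3" for z
    using that ES unfolding E1_def E2_def E3_def by (auto simp: add.commute)
  have psi0: "\<psi> z = 0" if "z \<notin> E \<union> E1 \<union> E2 \<union> E3" for z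
    using that by (simp add: \<psi>_def)
  have psib: "\<bar>\<psi> z\<bar> \<le> 2" for z
    by (simp add: \<psi>_def indicator_def)
  have kb: "\<bar>\<kappa>\<bar> = \<delta> / 2" using E(3) dpos by (auto simp: \<kappa>_def)
  have kpsi: "\<bar>\<kappa> * \<psi> z\<bar> \<le> \<delta>" for z
  proof -
    have "\<bar>\<kappa> * \<psi> z\<bar> = \<delta> / 2 * \<bar>\<psi> z\<bar>" by (simp add: abs_mult kb)
    also have "\<dots> \<le> \<delta> / 2 * 2" using psib[of z] dpos by (intro mult_left_mono) auto
    finally show ?thesis by simp
  qed
  have h'_bounds: "AE z in lebesgue. 0 \<le> h' z \<and> h' z \<le> hb z"
    using hG(2) hG(5)
  proof eventually_elim
    case (elim z)
    show ?case
    proof (cases "z \<in> E \<union> E1 \<union> E2 \<union> E3")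
      case True
      then have "\<delta> \<le> h z" "h z \<le> hb z - \<delta>" using hS inS by auto
      then show ?thesis using kpsi[of z] unfolding h'_def by (auto simp: abs_le_iff)
    next
      case False then show ?thesis using elim by (simp add: h'_def psi0)
    qed
  qed
  have psi_int: "integrable lebesgue \<psi>"
    unfolding \<psi>_def using lmeas_integrable_ind El
    by (intro Bochner_Integration.integrable_add Bochner_Integration.integrable_diff) auto
  have h'int: "integrable lebesgue h'" unfolding h'_def using hint psi_int by auto
  have h'supp: "AE z in lebesgue. z \<notin> Kh \<union> (E \<union> E1 \<union> E2 \<union> E3) \<longrightarrow> h' z = 0"
    using Kh(2) by eventually_elim (auto simp: h'_def psi0)
  have K'c: "compact (Kh \<union> (E \<union> E1 \<union> E2 \<union> E3))" using Kh(1) E(1) Ec by auto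
  have L1: "L1c h'" unfolding L1c_def using h'int h'supp K'c by blast
  have psi_x: "integrable lebesgue (\<lambda>y. \<kappa> * \<psi> (x,y)) \<and> (\<integral>y. \<kappa> * \<psi> (x,y) \<partial>lebesgue) = 0" for x
  proof -
    define A0 where "A0 = {y. (x,y) \<in> E}"
    define A1 where "A1 = {y. (x-a,y) \<in> E}"
    have e1: "(x,y) \<in> E1 \<longleftrightarrow> y \<in> A1" for y unfolding E1_def img_eq A1_def by simp
    have e2: "(x,y) \<in> E2 \<longleftrightarrow> y \<in> (+) b ` A0" for y unfolding E2_def img_eq A0_def by simp
    have e3: "(x,y) \<in> E3 \<longleftrightarrow> y \<in> (+) b ` A1" for y unfolding E3_def img_eq A1_def by simp
    have eqf: "(\<lambda>y. \<psi> (x,y)) = (\<lambda>y. indicator A0 y - indicator A1 y - indicator ((+) b ` A0) y + indicator ((+) b ` A1) y)"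
      by (rule ext) (simp add: \<psi>_def indicator_def e1 e2 e3 A0_def)
    have l: "A0 \<in> lmeasurable" "A1 \<in> lmeasurable" "(+) b ` A0 \<in> lmeasurable" "(+) b ` A1 \<in> lmeasurable"
      using sec_lmeas1[OF E(1)] measurable_translation unfolding A0_def A1_def by auto
    have i: "integrable lebesgue (indicator A0 :: _ \<Rightarrow> real)" "integrable lebesgue (indicator A1 :: _ \<Rightarrow> real)"
      "integrable lebesgue (indicator ((+) b ` A0) :: _ \<Rightarrow> real)" "integrable lebesgue (indicator ((+) b ` A1) :: _ \<Rightarrow> real)"
      using l lmeas_integrable_ind by auto
    have int: "integrable lebesgue (\<lambda>y. \<psi> (x,y))" unfolding eqf using i by auto
    have "(\<integral>y. \<psi> (x,y) \<partial>lebesgue) = 0"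
      unfolding eqf using i measure_translation[of b A0] measure_translation[of b A1] by simp
    then show ?thesis using int by simp
  qed
  have psi_y: "integrable lebesgue (\<lambda>x. \<kappa> * \<psi> (x,y)) \<and> (\<integral>x. \<kappa> * \<psi> (x,y) \<partial>lebesgue) = 0" for y
  proof -
    define A0 where "A0 = {x. (x,y) \<in> E}"
    define A1 where "A1 = {x. (x,y-b) \<in> E}"
    have e1: "(x,y) \<in> E1 \<longleftrightarrow> x \<in> (+) a ` A0" for x unfolding E1_def img_eq A0_def by simp
    have e2: "(x,y) \<in> E2 \<longleftrightarrow> x \<in> A1" for x unfolding E2_def img_eq A1_def by simp
    have e3: "(x,y) \<in> E3 \<longleftrightarrow> x \<in> (+) a ` A1" for x unfolding E3_def img_eq A1_def by simp
    have eqf: "(\<lambda>x. \<psi> (x,y)) = (\<lambda>x. indicator A0 x - indicator ((+) a ` A0) x - indicator A1 x + indicator ((+) a ` A1) x)"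
      by (rule ext) (simp add: \<psi>_def indicator_def e1 e2 e3 A0_def)
    have l: "A0 \<in> lmeasurable" "A1 \<in> lmeasurable" "(+) a ` A0 \<in> lmeasurable" "(+) a ` A1 \<in> lmeasurable"
      using sec_lmeas2[OF E(1)] measurable_translation unfolding A0_def A1_def by auto
    have i: "integrable lebesgue (indicator A0 :: _ \<Rightarrow> real)" "integrable lebesgue (indicator A1 :: _ \<Rightarrow> real)"
      "integrable lebesgue (indicator ((+) a ` A0) :: _ \<Rightarrow> real)" "integrable lebesgue (indicator ((+) a ` A1) :: _ \<Rightarrow> real)"
      using l lmeas_integrable_ind by auto
    have int: "integrable lebesgue (\<lambda>x. \<psi> (x,y))" unfolding eqf using i by auto
    have "(\<integral>x. \<psi> (x,y) \<partial>lebesgue) = 0"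
      unfolding eqf using i measure_translation[of a A0] measure_translation[of a A1] by simp
    then show ?thesis using int by simp
  qed
  have margx: "AE x in lebesgue. (\<integral>y. h' (x, y) \<partial>lebesgue) = f x"
    using hG(3)
  proof eventually_elim
    case (elim x)
    have "(\<integral>y. h' (x, y) \<partial>lebesgue) = (\<integral>y. h (x, y) \<partial>lebesgue)"
      unfolding h'_def using psi_x[of x] by (intro integral_add_zero) auto
    then show ?case using elim by simp
  qed
  have margy: "AE y in lebesgue. (\<integral>x. h' (x, y) \<partial>lebesgue) = g y"
    using hG(4)
  proof eventually_elim
    case (elim y)
    have "(\<integral>x. h' (x, y) \<partial>lebesgue) = (\<integral>x. h (x, y) \<partial>lebesgue)"
      unfolding h'_def using psi_y[of y] by (intro integral_add_zero) auto
    then show ?case using elim by simp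
  qed
  have h'G: "h' \<in> Gamma_bd f g hb"
    unfolding Gamma_bd_def Gamma_def using L1 margx margy h'_bounds
    by (auto elim: AE_mp)
  have cm: "c \<in> borel_measurable lebesgue" using cont by (rule cont_lebesgue_meas)
  have Mc0: "Mc \<ge> 0" using Mc[of undefined] by simp
  have chint: "integrable lebesgue (\<lambda>z. c z * h z)"
  proof -
    have i: "integrable lebesgue (\<lambda>z. Mc * h z)" using hint by simp
    have m: "(\<lambda>z. c z * h z) \<in> borel_measurable lebesgue" using cm hm by measurable
    have ae: "AE z in lebesgue. norm (c z * h z) \<le> norm (Mc * h z)"
      using Mc Mc0 by (auto simp: abs_mult intro!: mult_right_mono)
    show ?thesis by (rule Bochner_Integration.integrable_bound[OF i m ae])
  qed
  define cv where "cv v z = c (z + v)" for v z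
  have cvc: "continuous_on UNIV (cv v)" for v
    unfolding cv_def by (intro continuous_on_compose2[OF cont]) (auto intro!: continuous_intros)
  have cvm: "cv v \<in> borel_measurable lebesgue" for v using cvc[of v] by (rule cont_lebesgue_meas)
  have cvb: "\<bar>cv v z\<bar> \<le> Mc" for v z unfolding cv_def by (rule Mc)
  have iE: "integrable lebesgue (\<lambda>z. cv v z * indicator E z)" for v
    using integrable_c_ind[OF El(1) cvm cvb] .
  have iEk: "integrable lebesgue (\<lambda>z. c z * indicator A z)" if "A \<in> lmeasurable" for A
    using integrable_c_ind[OF that cm Mc] .
  have t1: "(\<integral>z. c z * indicator E1 z \<partial>lebesgue) = (\<integral>z. cv (a,0) z * indicator E z \<partial>lebesgue)"
    unfolding E1_def cv_def by (rule trans_int[OF cont E(1)])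
  have t2: "(\<integral>z. c z * indicator E2 z \<partial>lebesgue) = (\<integral>z. cv (0,b) z * indicator E z \<partial>lebesgue)"
    unfolding E2_def cv_def by (rule trans_int[OF cont E(1)])
  have t3: "(\<integral>z. c z * indicator E3 z \<partial>lebesgue) = (\<integral>z. cv (a,b) z * indicator E z \<partial>lebesgue)"
    unfolding E3_def cv_def by (rule trans_int[OF cont E(1)])
  define D where "D z = c (z + (a,b)) - c (z + (a,0)) - c (z + (0,b)) + c z" for z
  define J where "J = (\<integral>z. D z * indicator E z \<partial>lebesgue)"
  have cpsi: "(\<integral>z. c z * \<psi> z \<partial>lebesgue) = J"
  proof -
    have "(\<integral>z. c z * \<psi> z \<partial>lebesgue) = (\<integral>z. c z * indicator E z - c z * indicator E1 z - c z * indicator E2 z + c z * indicator E3 z \<partial>lebesgue)"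
      by (simp add: \<psi>_def algebra_simps)
    also have "\<dots> = (\<integral>z. c z * indicator E z \<partial>lebesgue) - (\<integral>z. c z * indicator E1 z \<partial>lebesgue)
        - (\<integral>z. c z * indicator E2 z \<partial>lebesgue) + (\<integral>z. c z * indicator E3 z \<partial>lebesgue)"
      using iEk El by simp
    also have "\<dots> = (\<integral>z. c z * indicator E z \<partial>lebesgue) - (\<integral>z. cv (a,0) z * indicator E z \<partial>lebesgue)
        - (\<integral>z. cv (0,b) z * indicator E z \<partial>lebesgue) + (\<integral>z. cv (a,b) z * indicator E z \<partial>lebesgue)"
      using t1 t2 t3 by simp
    also have "\<dots> = (\<integral>z. c z * indicator E z - cv (a,0) z * indicator E z - cv (0,b) z * indicator E z + cv (a,b) z * indicator E z \<partial>lebesgue)"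
      using iE iEk El by simp
    also have "\<dots> = J" unfolding J_def D_def cv_def by (simp add: algebra_simps)
    finally show ?thesis .
  qed
  have Dc: "continuous_on UNIV D"
    unfolding D_def by (intro continuous_intros continuous_on_compose2[OF cont]) (auto intro!: continuous_intros)
  have DE: "integrable lebesgue (\<lambda>z. D z * indicator E z)"
  proof -
    have "D \<in> borel_measurable lebesgue" using Dc by (rule cont_lebesgue_meas)
    moreover have "\<bar>D z\<bar> \<le> 4 * Mc" for z
      unfolding D_def using Mc[of z] Mc[of "z + (a,b)"] Mc[of "z + (a,0)"] Mc[of "z + (0,b)"] by (simp add: abs_le_iff)
    ultimately show ?thesis using integrable_c_ind[OF El(1)] by blast
  qed
  have Ene: "E \<noteq> {}" using E(2) by auto
  obtain z0 where z0: "z0 \<in> E" "\<forall>y\<in>E. \<sigma> * D z0 \<le> \<sigma> * D y"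
    using continuous_attains_inf[OF E(1) Ene, of "\<lambda>z. \<sigma> * D z"] Dc
    by (metis continuous_on_mult_left continuous_on_subset subset_UNIV)
  define md where "md = \<sigma> * D z0"
  have md: "md > 0" using Esg z0(1) by (simp add: md_def D_def)
  have "md * measure lebesgue E = (\<integral>z. md * indicator E z \<partial>lebesgue)"
    by simp
  also have "\<dots> \<le> (\<integral>z. \<sigma> * (D z * indicator E z) \<partial>lebesgue)"
  proof (rule integral_mono)
    show "integrable lebesgue (\<lambda>z. md * indicator E z)" using lmeas_integrable_ind[OF El(1)] by simp
    show "integrable lebesgue (\<lambda>z. \<sigma> * (D z * indicator E z))" using DE by simp
    fix z show "md * indicator E z \<le> \<sigma> * (D z * indicator E z)"
      using z0(2) by (cases "z \<in> E") (auto simp: md_def)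
  qed
  also have "\<dots> = \<sigma> * J" unfolding J_def by simp
  finally have sJ: "\<sigma> * J > 0" using md E(2) by (smt (verit) mult_pos_pos)
  have "I_c c h' = (\<integral>z. c z * h z + \<kappa> * (c z * \<psi> z) \<partial>lebesgue)"
    unfolding I_c_def h'_def by (simp add: algebra_simps)
  also have "\<dots> = I_c c h + \<kappa> * J"
  proof -
    have "integrable lebesgue (\<lambda>z. c z * \<psi> z)"
      unfolding \<psi>_def using iEk El by (simp add: algebra_simps)
    then show ?thesis unfolding I_c_def using chint cpsi by simp
  qed
  finally have "I_c c h' = I_c c h + \<kappa> * J" .
  moreover have "\<kappa> * J = - (\<delta> / 2) * (\<sigma> * J)" unfolding \<kappa>_def by simp
  moreover have "- (\<delta> / 2) * (\<sigma> * J) < 0" using sJ dpos by (simp add: mult_pos_pos)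
  ultimately have "I_c c h' < I_c c h" by linarith
  moreover have "I_c c h \<le> I_c c h'" using assms(13) h'G by blast
  ultimately show False by linarith
qed

end
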